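(* In the Classified Reallocation algorithm (with power-of-two laxities), suppose a client $c_i$ is reallocated out of the big channel during the processing of an arrival (because its laxity satisfies $w_i<\tau/2$ after $\tau$ is updated). Let $n$ be the number of active clients at the time of this reallocation and $n'$ the number of active clients at the time of the last allocation of $c_i$ to the big channel. Then $n\ge 2n'$.
   Context: Model: discrete time; each client $c_i$ has arrival time, departure time and laxity $w_i$ (a power of $2$), and must transmit at least once in every $w_i$ consecutive time steps while active; one transmission per channel per time step. A reallocation is a change of the channel of a client. For $x>0$, $\lceil\lceil x\rceil\rceil$ denotes the smallest power of $2$ not smaller than $x$. Classified Reallocation algorithm. Channels: one \emph{big channel} (all its clients transmit with period $\tau/2$) and \emph{$w$-channels} for powers of two $w$ (clients transmit with period $w$; at most $w$ clients; \emph{full} when holding $w$). State: $n$ (active clients, initially $0$), threshold $\tau$ (initially $2$). Arrival of $c_i$: $n\leftarrow n+1$. If $2\lceil\lceil n\rceil\rceil>\tau$: $\tau\leftarrow 2\lceil\lceil n\rceil\rceil$; each big-channel client $c_j$ with $w_j<\tau/2$ is reallocated to the non-full $w_j$-channel of minimum load (a new one reserved if needed); remaining big-channel clients get period $\tau/2$. Then if $w_i\ge\tau$, $c_i$ goes to the big channel; otherwise to the non-full $w_i$-channel of minimum load (new one reserved if needed). Departure of $c_i$ from channel $c$: $n\leftarrow n-1$. If $c$ is not the big channel: release $c$ if empty; otherwise if some $w_i$-channel $c'\ne c$ is not full, move one client from $c'$ to $c$. Then if $2\lceil\lceil n\rceil\rceil<\tau$: $\tau\leftarrow 2\lceil\lceil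 n\rceil\rceil$, big-channel clients get period $\tau/2$, and every $w$-channel with $w>2\tau$ has all its clients reallocated to the big channel and is released. *)

theory Defs
  imports Main
begin

text \<open>Smallest power of two not smaller than x (convention: ceil2 0 = 1).\<close>
definition ceil2 :: "nat \<Rightarrow> nat" where
  "ceil2 x = (LEAST p. (\<exists>e. p = 2 ^ e) \<and> x \<le> p)"

datatype chan = Big | WCh nat nat

text \<open>Algorithm state: active clients, clients that have ever arrived, laxities,
  channel of each client, reserved w-channels, counter n, threshold tau.\<close>
record st =
  act :: "nat set"
  arrived :: "nat set"
  lax :: "nat \<Rightarrow> nat"
  loc :: "nat \<Rightarrow> chan"
  resv :: "chan set"
  cnt :: nat
  tau :: nat

datatype event = Arrive nat nat | Depart nat

definition init_state :: "st \<Rightarrow> bool" where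
  "init_state s \<longleftrightarrow> act s = {} \<and> arrived s = {} \<and> resv s = {} \<and> cnt s = 0 \<and> tau s = 2"

definition load :: "st \<Rightarrow> chan \<Rightarrow> nat" where
  "load s c = card {j \<in> act s. loc s j = c}"

definition nonfull :: "st \<Rightarrow> nat \<Rightarrow> chan \<Rightarrow> bool" where
  "nonfull s w c \<longleftrightarrow> (\<exists>k. c = WCh w k) \<and> c \<in> resv s \<and> load s c < w"

definition place_choice :: "st \<Rightarrow> nat \<Rightarrow> chan \<Rightarrow> bool" where
  "place_choice s w c \<longleftrightarrow>
     (nonfull s w c \<and> (\<forall>c'. nonfull s w c' \<longrightarrow> load s c \<le> load s c'))
     \<or> ((\<nexists>c'. nonfull s w c') \<and> (\<exists>k. c = WCh w k) \<and> c \<notin> resv s)"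

inductive realloc :: "nat \<Rightarrow> st \<Rightarrow> st \<Rightarrow> bool" where
  realloc_done: "(\<forall>j\<in>act s. loc s j = Big \<longrightarrow> \<not> lax s j < t div 2) \<Longrightarrow> realloc t s s"
| realloc_step: "j \<in> act s \<Longrightarrow> loc s j = Big \<Longrightarrow> lax s j < t div 2 \<Longrightarrow>
     place_choice s (lax s j) c \<Longrightarrow>
     realloc t (s\<lparr>loc := (loc s)(j := c), resv := insert c (resv s)\<rparr>) s' \<Longrightarrow>
     realloc t s s'"

text \<open>step s e s' out inb: processing event e leads from s to s'; out is the set of
  clients reallocated out of the big channel during this step, inb the set of clients
  allocated to the big channel during this step.\<close>
inductive step :: "st \<Rightarrow> event \<Rightarrow> st \<Rightarrow> nat set \<Rightarrow> nat set \<Rightarrow> bool" where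
  arrive: "i \<notin> arrived s \<Longrightarrow> w = 2 ^ e \<Longrightarrow>
     s1 = s\<lparr>arrived := insert i (arrived s), lax := (lax s)(i := w), cnt := Suc (cnt s)\<rparr> \<Longrightarrow>
     (if tau s1 < 2 * ceil2 (cnt s1) then
        (let t = 2 * ceil2 (cnt s1) in
          out = {j \<in> act s1. loc s1 j = Big \<and> lax s1 j < t div 2} \<and>
          realloc t (s1\<lparr>tau := t\<rparr>) s2)
      else out = {} \<and> s2 = s1) \<Longrightarrow>
     (if tau s2 \<le> w then
        s' = s2\<lparr>loc := (loc s2)(i := Big), act := insert i (act s2)\<rparr> \<and> inb = {i}
      else
        (\<exists>c. place_choice s2 w c \<and>
           s' = s2\<lparr>loc := (loc s2)(i := c), resv := insert c (resv s2), act := insert i (act s2)\<rparr>)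
        \<and> inb = {}) \<Longrightarrow>
     step s (Arrive i w) s' out inb"
| depart: "i \<in> act s \<Longrightarrow> c = loc s i \<Longrightarrow>
     s1 = s\<lparr>act := act s - {i}, cnt := cnt s - 1\<rparr> \<Longrightarrow>
     (if c = Big then s2 = s1
      else if load s1 c = 0 then s2 = s1\<lparr>resv := resv s1 - {c}\<rparr>
      else if (\<exists>c' j. c' \<noteq> c \<and> nonfull s1 (lax s i) c' \<and> j \<in> act s1 \<and> loc s1 j = c') then
        (\<exists>c' j. c' \<noteq> c \<and> nonfull s1 (lax s i) c' \<and> j \<in> act s1 \<and> loc s1 j = c' \<and>
           s2 = s1\<lparr>loc := (loc s1)(j := c)\<rparr>)
      else s2 = s1) \<Longrightarrow>
     (if 2 * ceil2 (cnt s2) < tau s2 then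
        (let t = 2 * ceil2 (cnt s2);
             moved = {j \<in> act s2. \<exists>w k. loc s2 j = WCh w k \<and> 2 * t < w} in
          inb = moved \<and>
          s' = s2\<lparr>tau := t, loc := (\<lambda>j. if j \<in> moved then Big else loc s2 j),
                  resv := {c \<in> resv s2. \<forall>w k. c = WCh w k \<longrightarrow> w \<le> 2 * t}\<rparr>)
      else inb = {} \<and> s' = s2) \<Longrightarrow>
     step s (Depart i) s' {} inb"

end

theory Submission
  imports Defs
begin

definition invA :: "st \<Rightarrow> bool" where "invA s \<longleftrightarrow> act s \<subseteq> arrived s"
definition invJ :: "st \<Rightarrow> bool" where
  "invJ s \<longleftrightarrow> (\<forall>j\<in>act s. \<forall>w k. loc s j = WCh w k \<longrightarrow> lax s j = w)"
definition invT :: "st \<Rightarrow> bool" where "invT s \<longleftrightarrow> tau s = 2 * ceil2 (cnt s)"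

lemma ceil2_props: "\<exists>e. ceil2 x = 2 ^ e" "x \<le> ceil2 x"
  "(\<exists>e. p = 2 ^ e) \<Longrightarrow> x \<le> p \<Longrightarrow> ceil2 x \<le> p"
proof -
  have ex: "(\<exists>e. (2::nat) ^ x = 2 ^ e) \<and> x \<le> 2 ^ x" by auto
  have "(\<exists>e. ceil2 x = 2 ^ e) \<and> x \<le> ceil2 x"
    unfolding ceil2_def by (rule LeastI[of _ "2^x"]) (use ex in auto)
  then show "\<exists>e. ceil2 x = 2 ^ e" "x \<le> ceil2 x" by auto
  show "(\<exists>e. p = 2 ^ e) \<Longrightarrow> x \<le> p \<Longrightarrow> ceil2 x \<le> p"
    unfolding ceil2_def by (rule Least_le) auto
qed

lemma ceil2_mono: "x \<le> y \<Longrightarrow> ceil2 x \<le> ceil2 y"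
  using ceil2_props(1)[of y] ceil2_props(2)[of y] ceil2_props(3)[of "ceil2 y" x] by auto

lemma pc_W: "place_choice s w c \<Longrightarrow> \<exists>k. c = WCh w k"
  unfolding place_choice_def nonfull_def by auto

lemma realloc_props: "realloc t s s' \<Longrightarrow> act s' = act s \<and> arrived s' = arrived s \<and> lax s' = lax s
   \<and> cnt s' = cnt s \<and> tau s' = tau s \<and> (\<forall>j. loc s' j = loc s j \<or> (\<exists>k. loc s' j = WCh (lax s j) k))"
proof (induction rule: realloc.induct)
  case (realloc_done s t)
  then show ?case by auto
next
  case (realloc_step j s t c s')
  from pc_W[OF realloc_step(4)] obtain k where "c = WCh (lax s j) k" by auto
  with realloc_step(6) show ?case by (auto split: if_splits)
qed

lemma realloc_J: "realloc t s s' \<Longrightarrow> invJ s \<Longrightarrow> invJ s'"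
  using realloc_props[of t s s'] unfolding invJ_def by (metis chan.inject)

lemma realloc_Big: "realloc t s s' \<Longrightarrow> loc s' j = Big \<Longrightarrow> loc s j = Big"
  using realloc_props[of t s s'] by (metis chan.distinct(1))

lemma step_main:
  assumes st: "step s e s' ob b" and A: "invA s" and J: "invJ s" and T: "invT s"
  shows "invA s' \<and> invJ s' \<and> invT s'
    \<and> (\<forall>j\<in>act s'. loc s' j = Big \<longrightarrow> (j \<in> act s \<and> loc s j = Big) \<or> j \<in> b)
    \<and> (\<forall>j\<in>b. j \<in> act s' \<and> tau s' \<le> lax s' j)
    \<and> arrived s \<subseteq> arrived s' \<and> (\<forall>x\<in>arrived s. lax s' x = lax s x)
    \<and> (\<forall>i w j. e = Arrive i w \<longrightarrow> j \<in> ob \<longrightarrow>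
          j \<in> act s \<and> loc s j = Big \<and> lax s j < ceil2 (cnt s') \<and> cnt s' = Suc (cnt s))"
  using st
proof cases
  case (arrive i w ex s1 s2)
  have iA: "i \<notin> act s" using arrive A unfolding invA_def by auto
  have J1: "invJ s1" using J iA arrive unfolding invJ_def by auto
  have c1: "cnt s1 = Suc (cnt s)" "act s1 = act s" "loc s1 = loc s" "tau s1 = tau s"
    "arrived s1 = insert i (arrived s)" "lax s1 = (lax s)(i := w)" using arrive by auto
  have s2: "act s2 = act s \<and> arrived s2 = arrived s1 \<and> lax s2 = lax s1 \<and> cnt s2 = cnt s1
      \<and> tau s2 = 2 * ceil2 (cnt s1) \<and> invJ s2 \<and> (\<forall>j. loc s2 j = Big \<longrightarrow> loc s j = Big)"
  proof (cases "tau s1 < 2 * ceil2 (cnt s1)")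
    case True
    then have r: "realloc (2 * ceil2 (cnt s1)) (s1\<lparr>tau := 2 * ceil2 (cnt s1)\<rparr>) s2"
      using arrive by (simp add: Let_def)
    have "invJ (s1\<lparr>tau := 2 * ceil2 (cnt s1)\<rparr>)" using J1 unfolding invJ_def by simp
    then show ?thesis using realloc_props[OF r] realloc_J[OF r] realloc_Big[OF r] c1 by auto
  next
    case False
    then have "s2 = s1" using arrive by simp
    moreover have "tau s1 = 2 * ceil2 (cnt s1)"
      using False T c1 ceil2_mono[of "cnt s" "cnt s1"] unfolding invT_def by auto
    ultimately show ?thesis using J1 c1 by auto
  qed
  have out: "j \<in> ob \<Longrightarrow> j \<in> act s \<and> loc s j = Big \<and> lax s j < ceil2 (cnt s1)" for j
  proof -
    assume "j \<in> ob"
    then have "tau s1 < 2 * ceil2 (cnt s1)" and "j \<in> {j \<in> act s1. loc s1 j = Big \<and> lax s1 j < 2 * ceil2 (cnt s1) div 2}"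
      using arrive by (auto simp: Let_def split: if_splits)
    then show ?thesis using c1 iA by (auto split: if_splits)
  qed
  show ?thesis
  proof (cases "tau s2 \<le> w")
    case True
    then have s': "s' = s2\<lparr>loc := (loc s2)(i := Big), act := insert i (act s2)\<rparr>" "b = {i}"
      using arrive by auto
    show ?thesis using s' s2 c1 A J True out arrive iA unfolding invA_def invJ_def invT_def
      by (auto split: if_splits)
  next
    case False
    then obtain c where c: "place_choice s2 w c"
      "s' = s2\<lparr>loc := (loc s2)(i := c), resv := insert c (resv s2), act := insert i (act s2)\<rparr>" "b = {}"
      using arrive by auto
    obtain kk where ck: "c = WCh w kk" using pc_W[OF c(1)] by auto
    show ?thesis using c ck s2 c1 A J out arrive iA unfolding invA_def invJ_def invT_def
      by (auto split: if_splits)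
  qed
next
  case (depart i c s1 s2)
  have c1: "act s1 = act s - {i}" "cnt s1 = cnt s - 1" "loc s1 = loc s" "tau s1 = tau s"
    "arrived s1 = arrived s" "lax s1 = lax s" using depart by auto
  have s2: "act s2 = act s1 \<and> arrived s2 = arrived s1 \<and> lax s2 = lax s1 \<and> cnt s2 = cnt s1
      \<and> tau s2 = tau s1 \<and> invJ s2 \<and> (\<forall>j. loc s2 j = Big \<longrightarrow> loc s j = Big)"
  proof (cases "c = Big")
    case True
    then show ?thesis using depart(6) J c1 unfolding invJ_def by auto
  next
    case False
    then obtain w0 k0 where ck: "c = WCh w0 k0" by (cases c) auto
    have li: "lax s i = w0" using J depart(3,4) ck unfolding invJ_def by metis
    have J1: "invJ s1" using J c1 unfolding invJ_def by auto
    show ?thesis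
    proof (cases "load s1 c = 0")
      case True
      then show ?thesis using depart(6) False J1 c1 unfolding invJ_def by auto
    next
      case nz: False
      show ?thesis
      proof (cases "\<exists>c' j. c' \<noteq> c \<and> nonfull s1 (lax s i) c' \<and> j \<in> act s1 \<and> loc s1 j = c'")
        case True
        then obtain c' j where cj: "c' \<noteq> c" "nonfull s1 (lax s i) c'" "j \<in> act s1" "loc s1 j = c'"
          "s2 = s1\<lparr>loc := (loc s1)(j := c)\<rparr>" using depart(6) False nz by auto
        have "lax s j = w0" using cj(2,3,4) J c1 li unfolding invJ_def nonfull_def by auto
        then show ?thesis using cj ck J1 c1 unfolding invJ_def by auto
      next
        case nm: False
        then show ?thesis using depart(6) False nz nm J1 c1 by auto
      qed
    qed
  qed
  show ?thesis
  proof (cases "2 * ceil2 (cnt s2) < tau s2")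
    case True
    define t where "t = 2 * ceil2 (cnt s2)"
    define moved where "moved = {j \<in> act s2. \<exists>w k. loc s2 j = WCh w k \<and> 2 * t < w}"
    have s': "b = moved" "s' = s2\<lparr>tau := t, loc := (\<lambda>j. if j \<in> moved then Big else loc s2 j),
                  resv := {c \<in> resv s2. \<forall>w k. c = WCh w k \<longrightarrow> w \<le> 2 * t}\<rparr>"
      using depart(7) True unfolding t_def moved_def by (auto simp: Let_def)
    have mv: "j \<in> moved \<Longrightarrow> t \<le> lax s2 j" for j
      using s2 unfolding moved_def invJ_def by fastforce
    show ?thesis using s' s2 c1 A mv depart(1,2,3) unfolding invA_def invJ_def invT_def t_def
      by (auto simp: moved_def)
  next
    case False
    then have s': "b = {}" "s' = s2" using depart(7) by auto
    have "tau s2 = 2 * ceil2 (cnt s2)"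
      using False T c1 s2 ceil2_mono[of "cnt s - 1" "cnt s"] unfolding invT_def by auto
    then show ?thesis using s' s2 c1 A J depart(1,2,3) unfolding invA_def invT_def by auto
  qed
qed


lemma ceil2_0: "ceil2 0 = 1"
proof -
  have "\<exists>e. (1::nat) = 2 ^ e" by (rule exI[of _ 0]) simp
  then have "ceil2 0 \<le> 1" using ceil2_props(3)[of 1 0] by blast
  moreover obtain e where "ceil2 0 = 2 ^ e" using ceil2_props(1) by blast
  ultimately show ?thesis by (metis le_antisym one_le_numeral one_le_power)
qed

lemma arith_final:
  assumes "2 * ceil2 n' \<le> L" "L < ceil2 n" "n \<ge> 1"
  shows "2 * n' \<le> n"
proof -
  obtain a where a: "ceil2 n = 2 ^ a" using ceil2_props(1) by blast
  obtain b where b: "ceil2 n' = 2 ^ b" using ceil2_props(1) by blast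
  have "2 ^ Suc b < (2::nat) ^ a" using assms a b by simp
  then have ab: "Suc b < a" using power_less_imp_less_exp[of "2::nat" "Suc b" a] by simp
  define d where "d = a - Suc (Suc b)"
  have d: "a = Suc (Suc b) + d" using ab unfolding d_def by simp
  have "\<not> n \<le> 2 ^ (a - 1)"
  proof
    assume "n \<le> 2 ^ (a - 1)"
    then have "ceil2 n \<le> 2 ^ (a - 1)" using ceil2_props(3) by blast
    moreover have "(2::nat) ^ (a - 1) < 2 ^ a" using ab by (intro power_strict_increasing) auto
    ultimately show False using a by linarith
  qed
  then have "n > 2 ^ (Suc b + d)" using d by simp
  moreover have "(2::nat) ^ b \<le> 2 ^ (b + d)" by (simp add: power_increasing)
  moreover have "n' \<le> 2 ^ b" using ceil2_props(2)[of n'] b by simp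
  moreover have "(2::nat) ^ (Suc b + d) = 2 * 2 ^ (b + d)" by simp
  ultimately show ?thesis by linarith
qed

theorem lemma1:
  fixes ss :: "nat \<Rightarrow> st" and es :: "nat \<Rightarrow> event"
    and outB inB :: "nat \<Rightarrow> nat set" and m k j :: nat
  assumes "init_state (ss 0)"
    and "\<forall>l<m. step (ss l) (es l) (ss (Suc l)) (outB l) (inB l)"
    and "k < m"
    and "\<exists>i w. es k = Arrive i w"
    and "j \<in> outB k"
  shows "\<exists>k'<k. j \<in> inB k' \<and> (\<forall>l. k' < l \<and> l < k \<longrightarrow> j \<notin> inB l)
           \<and> 2 * cnt (ss (Suc k')) \<le> cnt (ss (Suc k))"
proof -
  note stp = assms(2)
  have inv: "l \<le> m \<Longrightarrow> invA (ss l) \<and> invJ (ss l) \<and> invT (ss l) \<and>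
      (\<forall>x\<in>act (ss l). loc (ss l) x = Big \<longrightarrow> (\<exists>k'<l. x \<in> inB k'))" for l
  proof (induction l)
    case 0
    then show ?case using assms(1) ceil2_0 unfolding init_state_def invA_def invJ_def invT_def by auto
  next
    case (Suc l)
    then have IH: "invA (ss l) \<and> invJ (ss l) \<and> invT (ss l) \<and>
      (\<forall>x\<in>act (ss l). loc (ss l) x = Big \<longrightarrow> (\<exists>k'<l. x \<in> inB k'))" by simp
    have st: "step (ss l) (es l) (ss (Suc l)) (outB l) (inB l)" using stp Suc by simp
    from step_main[OF st] IH show ?case by (meson less_SucI lessI)
  qed
  obtain i w where ek: "es k = Arrive i w" using assms(4) by blast
  have stk: "step (ss k) (es k) (ss (Suc k)) (outB k) (inB k)" using stp assms(3) by simp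
  have ik: "invA (ss k)" "invJ (ss k)" "invT (ss k)"
    "\<forall>x\<in>act (ss k). loc (ss k) x = Big \<longrightarrow> (\<exists>k'<k. x \<in> inB k')" using inv assms(3) by auto
  have outk: "j \<in> act (ss k)" "loc (ss k) j = Big" "lax (ss k) j < ceil2 (cnt (ss (Suc k)))"
      "cnt (ss (Suc k)) = Suc (cnt (ss k))"
    using step_main[OF stk ik(1-3)] ek assms(5) by blast+
  define S where "S = {k'. k' < k \<and> j \<in> inB k'}"
  have Sne: "S \<noteq> {}" using ik(4) outk unfolding S_def by blast
  have Sfin: "finite S" unfolding S_def by auto
  define K where "K = Max S"
  have KS: "K \<in> S" using Sne Sfin K_def Max_in by blast
  have Kmax: "\<And>l. l \<in> S \<Longrightarrow> l \<le> K" using Sfin K_def by simp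
  have Kk: "K < k" "j \<in> inB K" using KS S_def by auto
  have stK: "step (ss K) (es K) (ss (Suc K)) (outB K) (inB K)" using stp Kk assms(3) by simp
  have iK: "invA (ss K)" "invJ (ss K)" "invT (ss K)" using inv Kk assms(3) by auto
  have inK: "j \<in> act (ss (Suc K))" "tau (ss (Suc K)) \<le> lax (ss (Suc K)) j"
    using step_main[OF stK iK] Kk(2) by blast+
  have iSK: "invA (ss (Suc K))" "invT (ss (Suc K))" using inv Kk assms(3) by auto
  have arr: "j \<in> arrived (ss (Suc K))" using inK(1) iSK(1) unfolding invA_def by auto
  have persist: "Suc K \<le> l \<Longrightarrow> l \<le> k \<Longrightarrow> j \<in> arrived (ss l) \<and> lax (ss l) j = lax (ss (Suc K)) j" for l
  proof (induction l rule: dec_induct)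
    case base
    then show ?case using arr by simp
  next
    case (step q)
    have sq: "step (ss q) (es q) (ss (Suc q)) (outB q) (inB q)" using stp step assms(3) by simp
    have iq: "invA (ss q)" "invJ (ss q)" "invT (ss q)" using inv step assms(3) by auto
    show ?case using step_main[OF sq iq] step by auto
  qed
  have laxeq: "lax (ss k) j = lax (ss (Suc K)) j" using persist[of k] Kk by simp
  have "2 * ceil2 (cnt (ss (Suc K))) \<le> lax (ss k) j"
    using inK(2) iSK(2) laxeq unfolding invT_def by simp
  then have fin: "2 * cnt (ss (Suc K)) \<le> cnt (ss (Suc k))"
    using arith_final outk(3,4) by simp
  show ?thesis
  proof (intro exI conjI allI impI)
    show "K < k" "j \<in> inB K" by (rule Kk)+
    show "2 * cnt (ss (Suc K)) \<le> cnt (ss (Suc k))" by (rule fin)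
  next
    fix l assume kl: "K < l \<and> l < k"
    show "j \<notin> inB l"
    proof
      assume "j \<in> inB l"
      then have "l \<in> S" using kl unfolding S_def by auto
      then show False using Kmax kl by fastforce
    qed
  qed
qed

end
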